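(* Let $S$ be a finite set, let $p:2^{S}\to\mathbb{Z}\cup\{-\infty\}$ be fully supermodular with $p(\emptyset)=0$ and $p(S)$ finite, and let $B=B'(p)$. Let $f:S\to\mathbb{Z}\cup\{-\infty\}$ and $g:S\to\mathbb{Z}\cup\{+\infty\}$ with $f\le g$, let $T(f,g)=\{x\in\mathbb{R}^S: f\le x\le g\}$, and suppose $B^{\square}:=B\cap T(f,g)$ is non-empty; let $p^{\square}$ be the fully supermodular function with $B^{\square}=B'(p^{\square})$. Let $m\in B^{\square}\cap\mathbb{Z}^S$ and $u\in S$. Let $T_m(u)$ be the smallest $m$-tight set with respect to $p$ containing $u$, and $T^{\square}_m(u)$ the smallest $m$-tight set with respect to $p^{\square}$ containing $u$. Then $T^{\square}_m(u)=\{u\}$ if $m(u)=f(u)$, and $T^{\square}_m(u)=T_m(u)-\{v\in S-\{u\}: m(v)=g(v)\}$ if $m(u)>f(u)$.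
   Context: For $x\in\mathbb{R}^{S}$, $\widetilde x(Z)=\sum_{s\in Z}x(s)$. $B'(p)=\{x\in\mathbb{R}^{S}:\widetilde x(S)=p(S),\ \widetilde x(Z)\ge p(Z)\ \forall Z\subset S\}$, an integral base-polyhedron. A set $X\subseteq S$ is $m$-tight with respect to $p$ if $\widetilde m(X)=p(X)$; for fully supermodular $p$ and $m\in B'(p)$ the $m$-tight sets are closed under union and intersection, so a smallest $m$-tight set containing $u$ exists; it equals $\{s\in S: m+\chi_s-\chi_u\in B'(p)\}$, where $\chi_s$ is the unit vector of $s$. *)

theory Defs
  imports "HOL-Library.Extended_Real"
begin

definition int_or_minf :: "ereal \<Rightarrow> bool" where
  "int_or_minf e \<longleftrightarrow> e = -\<infinity> \<or> (\<exists>k::int. e = ereal (of_int k))"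

definition int_or_pinf :: "ereal \<Rightarrow> bool" where
  "int_or_pinf e \<longleftrightarrow> e = \<infinity> \<or> (\<exists>k::int. e = ereal (of_int k))"

definition fully_supermodular :: "'a set \<Rightarrow> ('a set \<Rightarrow> ereal) \<Rightarrow> bool" where
  "fully_supermodular S p \<longleftrightarrow>
     (\<forall>X. X \<subseteq> S \<longrightarrow> int_or_minf (p X)) \<and>
     (\<forall>X Y. X \<subseteq> S \<longrightarrow> Y \<subseteq> S \<longrightarrow> p X + p Y \<le> p (X \<inter> Y) + p (X \<union> Y))"

text \<open>Vectors in R^S are functions that vanish outside S.\<close>
definition vecs :: "'a set \<Rightarrow> ('a \<Rightarrow> real) set" where
  "vecs S = {x. \<forall>s. s \<notin> S \<longrightarrow> x s = 0}"

definition Bp :: "'a set \<Rightarrow> ('a set \<Rightarrow> ereal) \<Rightarrow> ('a \<Rightarrow> real) set" where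
  "Bp S p = {x \<in> vecs S. ereal (sum x S) = p S \<and>
                          (\<forall>Z. Z \<subset> S \<longrightarrow> ereal (sum x Z) \<ge> p Z)}"

definition box :: "'a set \<Rightarrow> ('a \<Rightarrow> ereal) \<Rightarrow> ('a \<Rightarrow> ereal) \<Rightarrow> ('a \<Rightarrow> real) set" where
  "box S f g = {x \<in> vecs S. \<forall>s\<in>S. f s \<le> ereal (x s) \<and> ereal (x s) \<le> g s}"

definition tight :: "('a set \<Rightarrow> ereal) \<Rightarrow> ('a \<Rightarrow> real) \<Rightarrow> 'a set \<Rightarrow> bool" where
  "tight p m X \<longleftrightarrow> ereal (sum m X) = p X"

definition smallest_tight :: "'a set \<Rightarrow> ('a set \<Rightarrow> ereal) \<Rightarrow> ('a \<Rightarrow> real) \<Rightarrow> 'a \<Rightarrow> 'a set" where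
  "smallest_tight S p m u = \<Inter>{X. X \<subseteq> S \<and> u \<in> X \<and> tight p m X}"

end

theory Submission
  imports Defs
begin

definition shiftv :: "('a \<Rightarrow> real) \<Rightarrow> 'a \<Rightarrow> 'a \<Rightarrow> 'a \<Rightarrow> real" where
  "shiftv m s u = (\<lambda>v. m v + (if v = s then 1 else 0) - (if v = u then 1 else 0))"

lemma sum_shiftv:
  assumes "finite Z"
  shows "sum (shiftv m s u) Z = sum m Z + (if s \<in> Z then 1 else 0) - (if u \<in> Z then 1 else 0)"
  using assms by (simp add: shiftv_def sum.distrib sum_subtractf)

lemma int_gap:
  assumes "x \<in> \<int>" "int_or_minf e" "ereal x \<ge> e" "ereal x \<noteq> e"
  shows "ereal (x - 1) \<ge> e"
proof -
  from assms(1) obtain j where j: "x = of_int j" by (auto elim: Ints_cases)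
  show ?thesis
  proof (cases "e = -\<infinity>")
    case True then show ?thesis by simp
  next
    case False
    then obtain k where k: "e = ereal (of_int k)" using assms(2) unfolding int_or_minf_def by auto
    with assms(3,4) j have "k < j" by auto
    then show ?thesis using j k by simp
  qed
qed

lemma tight_char:
  assumes fin: "finite S" and qi: "\<forall>X. X \<subseteq> S \<longrightarrow> int_or_minf (q X)"
    and mB: "m \<in> Bp S q" and mi: "\<forall>s\<in>S. m s \<in> \<int>" and u: "u \<in> S" and s: "s \<in> S"
  shows "s \<in> smallest_tight S q m u \<longleftrightarrow> shiftv m s u \<in> Bp S q"
proof
  assume H: "s \<in> smallest_tight S q m u"
  have vec: "shiftv m s u \<in> vecs S" using mB s u by (auto simp: Bp_def vecs_def shiftv_def)
  have sumS: "ereal (sum (shiftv m s u) S) = q S" using mB s u fin by (simp add: sum_shiftv Bp_def)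
  have "ereal (sum (shiftv m s u) Z) \<ge> q Z" if Z: "Z \<subset> S" for Z
  proof -
    have finZ: "finite Z" using Z fin finite_subset by auto
    have ge: "ereal (sum m Z) \<ge> q Z" using mB Z by (auto simp: Bp_def)
    show ?thesis
    proof (cases "s \<in> Z \<or> u \<notin> Z")
      case True
      then have "sum m Z \<le> sum (shiftv m s u) Z" using finZ by (auto simp: sum_shiftv)
      then show ?thesis using ge order_trans by fastforce
    next
      case False
      then have nt: "ereal (sum m Z) \<noteq> q Z"
        using H Z unfolding smallest_tight_def tight_def by auto
      have "sum m Z \<in> \<int>" using mi Z by (intro Ints_sum) auto
      from int_gap[OF this _ ge nt] qi Z
      show ?thesis using False finZ by (simp add: sum_shiftv)
    qed
  qed
  then show "shiftv m s u \<in> Bp S q" using vec sumS by (simp add: Bp_def)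
next
  assume H: "shiftv m s u \<in> Bp S q"
  show "s \<in> smallest_tight S q m u"
    unfolding smallest_tight_def
  proof (rule InterI)
    fix X assume X: "X \<in> {X. X \<subseteq> S \<and> u \<in> X \<and> tight q m X}"
    show "s \<in> X"
    proof (rule ccontr)
      assume ns: "s \<notin> X"
      then have "X \<subset> S" using X s by auto
      then have "ereal (sum (shiftv m s u) X) \<ge> q X" using H by (auto simp: Bp_def)
      moreover have "finite X" using X fin finite_subset by auto
      ultimately have "ereal (sum m X - 1) \<ge> ereal (sum m X)"
        using X ns by (simp add: sum_shiftv tight_def)
      then show False by simp
    qed
  qed
qed

lemma st_sub:
  assumes "ereal (sum m S) = q S" "u \<in> S"
  shows "smallest_tight S q m u \<subseteq> S"
proof -
  have "S \<in> {X. X \<subseteq> S \<and> u \<in> X \<and> tight q m X}" using assms by (simp add: tight_def)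
  then show ?thesis unfolding smallest_tight_def by (rule Inter_lower)
qed

lemma box_char:
  assumes mb: "m \<in> box S f g" and mi: "\<forall>s\<in>S. m s \<in> \<int>"
    and fi: "\<forall>s\<in>S. int_or_minf (f s)" and gi: "\<forall>s\<in>S. int_or_pinf (g s)"
    and u: "u \<in> S" and s: "s \<in> S" and su: "s \<noteq> u"
  shows "shiftv m s u \<in> box S f g \<longleftrightarrow> ereal (m s) \<noteq> g s \<and> ereal (m u) \<noteq> f u"
proof -
  have vec: "shiftv m s u \<in> vecs S" using mb s u by (auto simp: box_def vecs_def shiftv_def)
  have mbx: "\<forall>v\<in>S. f v \<le> ereal (m v) \<and> ereal (m v) \<le> g v" using mb by (auto simp: box_def)
  have A: "ereal (m s + 1) \<le> g s \<longleftrightarrow> ereal (m s) \<noteq> g s"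
  proof -
    obtain j where j: "m s = of_int j" using mi s by (auto elim: Ints_cases)
    have le: "ereal (m s) \<le> g s" using mbx s by auto
    show ?thesis
    proof (cases "g s = \<infinity>")
      case True then show ?thesis by simp
    next
      case False
      then obtain k where k: "g s = ereal (of_int k)" using gi s unfolding int_or_pinf_def by auto
      show ?thesis using le j k by auto
    qed
  qed
  have B: "f u \<le> ereal (m u - 1) \<longleftrightarrow> ereal (m u) \<noteq> f u"
  proof -
    obtain j where j: "m u = of_int j" using mi u by (auto elim: Ints_cases)
    have le: "f u \<le> ereal (m u)" using mbx u by auto
    show ?thesis
    proof (cases "f u = -\<infinity>")
      case True then show ?thesis by simp
    next
      case False
      then obtain k where k: "f u = ereal (of_int k)" using fi u unfolding int_or_minf_def by auto
      show ?thesis using le j k by auto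
    qed
  qed
  have C1: "f s \<le> ereal (m s + 1)"
  proof -
    have "f s \<le> ereal (m s)" using mbx s by blast
    also have "\<dots> \<le> ereal (m s + 1)" by simp
    finally show ?thesis .
  qed
  have C2: "ereal (m u - 1) \<le> g u"
  proof -
    have "ereal (m u - 1) \<le> ereal (m u)" by simp
    also have "\<dots> \<le> g u" using mbx u by blast
    finally show ?thesis .
  qed
  have "shiftv m s u \<in> box S f g \<longleftrightarrow>
        (\<forall>v\<in>S. f v \<le> ereal (shiftv m s u v) \<and> ereal (shiftv m s u v) \<le> g v)"
    using vec by (simp add: box_def)
  also have "\<dots> \<longleftrightarrow> ereal (m s + 1) \<le> g s \<and> f u \<le> ereal (m u - 1)"
  proof
    assume "\<forall>v\<in>S. f v \<le> ereal (shiftv m s u v) \<and> ereal (shiftv m s u v) \<le> g v"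
    then have "ereal (shiftv m s u s) \<le> g s" "f u \<le> ereal (shiftv m s u u)" using s u by auto
    then show "ereal (m s + 1) \<le> g s \<and> f u \<le> ereal (m u - 1)" using su by (simp add: shiftv_def)
  next
    assume H: "ereal (m s + 1) \<le> g s \<and> f u \<le> ereal (m u - 1)"
    show "\<forall>v\<in>S. f v \<le> ereal (shiftv m s u v) \<and> ereal (shiftv m s u v) \<le> g v"
    proof
      fix v assume v: "v \<in> S"
      show "f v \<le> ereal (shiftv m s u v) \<and> ereal (shiftv m s u v) \<le> g v"
        using H C1 C2 mbx v su by (auto simp: shiftv_def)
    qed
  qed
  finally show ?thesis using A B by simp
qed

theorem claim2p9:
  fixes S :: "'a set" and p pb :: "'a set \<Rightarrow> ereal"
    and f g :: "'a \<Rightarrow> ereal" and m :: "'a \<Rightarrow> real" and u :: 'a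
  assumes "finite S"
    and "fully_supermodular S p" and "p {} = 0" and "p S \<noteq> -\<infinity>"
    and "\<forall>s\<in>S. int_or_minf (f s)" and "\<forall>s\<in>S. int_or_pinf (g s)"
    and "\<forall>s\<in>S. f s \<le> g s"
    and "Bp S p \<inter> box S f g \<noteq> {}"
    and "fully_supermodular S pb" and "pb {} = 0" and "pb S \<noteq> -\<infinity>"
    and "Bp S pb = Bp S p \<inter> box S f g"
    and "m \<in> Bp S p \<inter> box S f g" and "\<forall>s\<in>S. m s \<in> \<int>"
    and "u \<in> S"
  shows "(ereal (m u) = f u \<longrightarrow> smallest_tight S pb m u = {u}) \<and>
         (ereal (m u) > f u \<longrightarrow>
            smallest_tight S pb m u =
              smallest_tight S p m u - {v \<in> S - {u}. ereal (m v) = g v})"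
proof -
  have pi: "\<forall>X. X \<subseteq> S \<longrightarrow> int_or_minf (p X)" using assms(2) by (simp add: fully_supermodular_def)
  have pbi: "\<forall>X. X \<subseteq> S \<longrightarrow> int_or_minf (pb X)" using assms(9) by (simp add: fully_supermodular_def)
  have mB: "m \<in> Bp S p" and mbox: "m \<in> box S f g" using assms(13) by auto
  have mBb: "m \<in> Bp S pb" using assms(12,13) by simp
  have shu: "shiftv m u u = m" by (simp add: shiftv_def)
  have cP: "\<And>s. s \<in> S \<Longrightarrow> s \<in> smallest_tight S p m u \<longleftrightarrow> shiftv m s u \<in> Bp S p"
    using tight_char[OF assms(1) pi mB assms(14) assms(15)] by blast
  have cB: "\<And>s. s \<in> S \<Longrightarrow> s \<in> smallest_tight S pb m u \<longleftrightarrow> shiftv m s u \<in> Bp S p \<inter> box S f g"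
    using tight_char[OF assms(1) pbi mBb assms(14) assms(15)] assms(12) by simp
  have subP: "smallest_tight S p m u \<subseteq> S" by (rule st_sub) (use mB assms(15) in \<open>simp_all add: Bp_def\<close>)
  have subB: "smallest_tight S pb m u \<subseteq> S" by (rule st_sub) (use mBb assms(15) in \<open>simp_all add: Bp_def\<close>)
  have bx: "\<And>s. s \<in> S \<Longrightarrow> s \<noteq> u \<Longrightarrow> shiftv m s u \<in> box S f g \<longleftrightarrow> ereal (m s) \<noteq> g s \<and> ereal (m u) \<noteq> f u"
    using box_char[OF mbox assms(14) assms(5) assms(6) assms(15)] by blast
  have uB: "u \<in> smallest_tight S pb m u" using cB[OF assms(15)] shu mB mbox by simp
  have uP: "u \<in> smallest_tight S p m u" using cP[OF assms(15)] shu mB by simp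
  show ?thesis
  proof (intro conjI impI)
    assume "ereal (m u) = f u"
    then show "smallest_tight S pb m u = {u}" using subB uB cB bx by auto
  next
    assume "ereal (m u) > f u"
    then have ne: "ereal (m u) \<noteq> f u" by simp
    show "smallest_tight S pb m u = smallest_tight S p m u - {v \<in> S - {u}. ereal (m v) = g v}"
    proof (rule set_eqI)
      fix s
      show "s \<in> smallest_tight S pb m u \<longleftrightarrow> s \<in> smallest_tight S p m u - {v \<in> S - {u}. ereal (m v) = g v}"
      proof (cases "s \<in> S")
        case False then show ?thesis using subB subP by auto
      next
        case True
        show ?thesis
        proof (cases "s = u")
          case True then show ?thesis using uB uP by simp
        next
          case False
          then show ?thesis using cB[OF \<open>s \<in> S\<close>] cP[OF \<open>s \<in> S\<close>] bx[OF \<open>s \<in> S\<close> False] ne \<open>s \<in> S\<close> by auto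
        qed
      qed
    qed
  qed
qed

end
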